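(* Let $\mathfrak k$ be a nonzero semisimple Hilbert–Lie algebra and $\phi$ an automorphism of $\mathfrak k$ of finite order. Then the fixed point algebra $\mathfrak k^\phi=\{x\in\mathfrak k:\phi(x)=x\}$ is nonzero.
   Context: A Hilbert–Lie algebra is a real Lie algebra with Hilbert space structure such that $\langle[x,y],z\rangle=\langle x,[y,z]\rangle$; it is semisimple if its center is trivial (equivalently it is an orthogonal sum of simple ideals). Automorphisms are isometric Lie algebra automorphisms. *)

theory Defs
  imports "HOL-Analysis.Analysis"
begin

definition lie_algebra :: "('a::real_vector \<Rightarrow> 'a \<Rightarrow> 'a) \<Rightarrow> bool" where
  "lie_algebra br \<longleftrightarrow>
     (\<forall>x. linear (br x)) \<and> (\<forall>y. linear (\<lambda>x. br x y)) \<and>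
     (\<forall>x. br x x = 0) \<and>
     (\<forall>x y z. br x (br y z) + br y (br z x) + br z (br x y) = 0)"

definition hilbert_lie_algebra :: "('a::{real_inner,complete_space} \<Rightarrow> 'a \<Rightarrow> 'a) \<Rightarrow> bool" where
  "hilbert_lie_algebra br \<longleftrightarrow> lie_algebra br \<and>
     (\<forall>x y z. inner (br x y) z = inner x (br y z))"

definition lie_center :: "('a::real_vector \<Rightarrow> 'a \<Rightarrow> 'a) \<Rightarrow> 'a set" where
  "lie_center br = {z. \<forall>x. br z x = 0}"

definition semisimple_hilbert_lie_algebra :: "('a::{real_inner,complete_space} \<Rightarrow> 'a \<Rightarrow> 'a) \<Rightarrow> bool" where
  "semisimple_hilbert_lie_algebra br \<longleftrightarrow> hilbert_lie_algebra br \<and> lie_center br = {0}"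

definition hl_automorphism :: "('a::real_normed_vector \<Rightarrow> 'a \<Rightarrow> 'a) \<Rightarrow> ('a \<Rightarrow> 'a) \<Rightarrow> bool" where
  "hl_automorphism br \<phi> \<longleftrightarrow> linear \<phi> \<and> bij \<phi> \<and>
     (\<forall>x y. \<phi> (br x y) = br (\<phi> x) (\<phi> y)) \<and> (\<forall>x. norm (\<phi> x) = norm x)"

definition finite_order :: "('a \<Rightarrow> 'a) \<Rightarrow> bool" where
  "finite_order \<phi> \<longleftrightarrow> (\<exists>n>0. (\<phi> ^^ n) = id)"

end

theory Submission
  imports Defs "HOL-Computational_Algebra.Primes"
begin


lemma coprime_by_primes_int:
  fixes a b :: int
  assumes "b \<noteq> 0" "\<And>p. prime p \<Longrightarrow> p dvd b \<Longrightarrow> \<not> p dvd a"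
  shows "coprime a b"
proof (rule ccontr)
  assume "\<not> coprime a b"
  then have "\<not> is_unit (gcd a b)" by (simp add: coprime_iff_gcd_eq_1)
  moreover have "gcd a b \<noteq> 0" using assms(1) by simp
  ultimately obtain p where "prime p" "p dvd gcd a b" using prime_divisor_exists by blast
  then show False using assms(2) by auto
qed

lemma arith1:
  fixes n u j :: int
  assumes "n > 0" "coprime u n"
  shows "\<exists>m::nat. (j + int m * u) mod n = (- u) mod n"
proof -
  obtain a b where ab: "a * u + b * n = 1"
    using bezout_int[of u n] assms(2) by (auto simp: coprime_iff_gcd_eq_1)
  define X where "X = - (j + u) * a"
  have X: "X mod n = X - n * (X div n)" by (simp add: minus_div_mult_eq_mod[symmetric])
  have "int (nat (X mod n)) = X mod n" using assms(1) by simp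
  moreover have "(j + (X mod n) * u) = -u + ((j+u)*b - (X div n)*u) * n"
  proof -
    have "j + (X mod n) * u = j + X * u - n * (X div n) * u" unfolding X by (simp add: algebra_simps)
    also have "X * u = - (j+u) * (a*u)" unfolding X_def by (simp add: algebra_simps)
    also have "a * u = 1 - b * n" using ab by simp
    finally show ?thesis by (simp add: algebra_simps)
  qed
  ultimately have "(j + int (nat (X mod n)) * u) mod n = (-u) mod n" by (simp only: mod_mult_self1)
  then show ?thesis by blast
qed

lemma arith2:
  fixes n i j :: int
  assumes "n > 0" "gcd (gcd i j) n = 1"
  shows "\<exists>m::nat. m \<ge> 1 \<and> coprime (j + int m * i) n"
proof -
  define S where "S = {p \<in> prime_factors n. \<not> p dvd j}"
  define M where "M = \<Prod>S"
  have finS: "finite S" unfolding S_def by simp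
  have Spr: "\<And>p. p \<in> S \<Longrightarrow> prime p \<and> p dvd n \<and> \<not> p dvd j" unfolding S_def
    by (auto intro: in_prime_factors_imp_dvd simp: in_prime_factors_iff)
  have Mpos: "M > 0" unfolding M_def using Spr
    by (intro prod_pos) (auto intro: prime_gt_0_int)
  have "coprime (j + M * i) n"
  proof (rule coprime_by_primes_int)
    show "n \<noteq> 0" using assms by simp
    fix q :: int assume q: "prime q" "q dvd n"
    show "\<not> q dvd (j + M * i)"
    proof (cases "q dvd j")
      case True
      have "\<not> q dvd i"
      proof
        assume "q dvd i"
        then have "q dvd gcd (gcd i j) n" using True q by simp
        then have "q dvd 1" using assms(2) by simp
        then show False using q(1) by (meson not_prime_unit)
      qed
      moreover have "\<not> q dvd M"
      proof
        assume "q dvd M"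
        then obtain p where p: "p \<in> S" "q dvd p" unfolding M_def using prime_dvd_prod_iff[OF finS q(1)] by auto
        then have "q = p" using Spr[OF p(1)] q(1)
          by (metis prime_nat_iff_prime prime_int_iff primes_dvd_imp_eq)
        then show False using Spr[OF p(1)] True by simp
      qed
      ultimately have "\<not> q dvd M * i" using q(1) by (simp add: prime_dvd_mult_iff)
      then show ?thesis using True by (simp add: dvd_add_right_iff)
    next
      case False
      then have "q \<in> S" unfolding S_def using q assms(1) by (simp add: in_prime_factors_iff)
      then have "q dvd M" unfolding M_def using finS dvd_prodI[of S q id] by simp
      then have "q dvd M * i" by simp
      then show ?thesis using False by (simp add: dvd_add_left_iff)
    qed
  qed
  moreover have "int (nat M) = M" using Mpos by simp
  moreover have "nat M \<ge> 1" using Mpos by simp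
  ultimately show ?thesis by metis
qed

locale grad =
  fixes n :: int and bc :: "'b::zero \<Rightarrow> 'b \<Rightarrow> 'b" and cj :: "'b \<Rightarrow> 'b" and V :: "int \<Rightarrow> 'b set"
  assumes npos: "n > 0"
  and per: "\<And>j. V (j mod n) = V j"
  and H2: "\<And>x. x \<in> V 0 \<Longrightarrow> x = 0"
  and H3: "\<And>i j x y. x \<in> V i \<Longrightarrow> y \<in> V j \<Longrightarrow> bc x y \<in> V (i + j)"
  and H5: "\<And>i x v. x \<in> V i \<Longrightarrow> bc x (bc x v) = 0 \<Longrightarrow> bc x v = 0"
  and H6: "\<And>z v. bc (cj v) (bc z v) = 0 \<Longrightarrow> bc z v = 0"
  and H7: "\<And>i x. x \<in> V i \<Longrightarrow> cj x \<in> V (- i)"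
  and H8: "\<And>x y. bc x y = 0 \<Longrightarrow> bc y x = 0"
begin

lemma V_cong: "a mod n = b mod n \<Longrightarrow> V a = V b"
  by (metis per)

lemma iter_mem: "z \<in> V i \<Longrightarrow> v \<in> V j \<Longrightarrow> (bc z ^^ m) v \<in> V (j + int m * i)"
proof (induction m)
  case 0 then show ?case by simp
next
  case (Suc m)
  have "bc z ((bc z ^^ m) v) \<in> V (i + (j + int m * i))" using H3 Suc by blast
  moreover have "i + (j + int m * i) = j + int (Suc m) * i" by (simp add: algebra_simps)
  ultimately show ?case by simp
qed

lemma iter_zero: "z \<in> V i \<Longrightarrow> (bc z ^^ Suc m) v = 0 \<Longrightarrow> bc z v = 0"
proof (induction m)
  case 0 then show ?case by simp
next
  case (Suc m)
  have "bc z (bc z ((bc z ^^ m) v)) = 0" using Suc.prems by simp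
  then have "bc z ((bc z ^^ m) v) = 0" using H5 Suc.prems(1) by blast
  then show ?case using Suc by simp
qed

lemma bracket_neg: "x \<in> V i \<Longrightarrow> y \<in> V (- i) \<Longrightarrow> bc x y = 0"
  using H3[of x i y "-i"] H2 by simp

lemma unit_central:
  assumes "coprime u n" "z \<in> V u" "y \<in> V j"
  shows "bc z y = 0"
proof -
  obtain m :: nat where m: "(j + int m * u) mod n = (- u) mod n" using arith1[OF npos assms(1)] by blast
  have "(bc z ^^ m) y \<in> V (- u)" using iter_mem[OF assms(2,3), of m] V_cong[OF m] by simp
  then have "bc z ((bc z ^^ m) y) = 0" using bracket_neg[OF assms(2)] by blast
  then have "(bc z ^^ Suc m) y = 0" by simp
  then show ?thesis using iter_zero[OF assms(2)] by blast
qed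

lemma coprime_case:
  assumes "gcd (gcd i j) n = 1" "z \<in> V i" "v \<in> V j"
  shows "bc z v = 0"
proof -
  obtain m :: nat where m: "m \<ge> 1" "coprime (j + int m * i) n" using arith2[OF npos assms(1)] by blast
  then obtain k where k: "m = Suc k" by (cases m) auto
  define v' where "v' = (bc z ^^ k) v"
  have v': "v' \<in> V (j + int k * i)" unfolding v'_def using iter_mem[OF assms(2,3)] by blast
  have w: "bc z v' \<in> V (j + int m * i)" unfolding v'_def using iter_mem[OF assms(2,3), of m] k by simp
  have "cj v' \<in> V (- (j + int k * i))" using H7[OF v'] .
  then have "bc (bc z v') (cj v') = 0" using unit_central[OF m(2) w] by blast
  then have "bc (cj v') (bc z v') = 0" using H8 by blast
  then have "bc z v' = 0" using H6 by blast
  then have "(bc z ^^ Suc k) v = 0" unfolding v'_def by simp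
  then show ?thesis using iter_zero[OF assms(2)] by blast
qed

end

lemma grad_abelian:
  assumes "grad n bc cj V" "x \<in> V i" "y \<in> V j"
  shows "bc x y = 0"
  using assms
proof (induction "nat n" arbitrary: n V i j x y rule: less_induct)
  case less
  interpret g: grad n bc cj V by fact
  show ?case
  proof (cases "gcd (gcd i j) n = 1")
    case True
    show ?thesis by (rule g.coprime_case[OF True less.prems(2,3)])
  next
    case False
    have "gcd (gcd i j) n \<noteq> 0" using g.npos by simp
    moreover have "\<not> is_unit (gcd (gcd i j) n)" using False by simp
    ultimately obtain p where p: "prime p" "p dvd gcd (gcd i j) n" using prime_divisor_exists by blast
    then have pi: "p dvd i" and pj: "p dvd j" and pn: "p dvd n" by auto
    obtain n' where n': "n = p * n'" using pn by blast
    have p2: "p \<ge> 2" using p(1) prime_ge_2_int by blast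
    have n'pos: "n' > 0" using g.npos n' p2 by (simp add: zero_less_mult_iff)
    have lt: "nat n' < nat n" using n' n'pos p2 by simp
    define V' where "V' k = V (p * k)" for k
    have "grad n' bc cj V'"
    proof
      show "n' > 0" by fact
      fix k
      have "p * k = p * (k mod n') + n * (k div n')" proof -
        have "k = k mod n' + n' * (k div n')" by simp
        then have "p * k = p * (k mod n') + (p * n') * (k div n')" by (metis distrib_left mult.assoc)
        then show ?thesis using n' by simp
      qed
      then have "V (p * k) = V (p * (k mod n'))"
        by (metis g.V_cong mod_mult_self2)
      then show "V' (k mod n') = V' k" unfolding V'_def by simp
    next
      fix x assume "x \<in> V' 0" then show "x = 0" unfolding V'_def using g.H2 by simp
    next
      fix i j x y assume "x \<in> V' i" "y \<in> V' j"
      then show "bc x y \<in> V' (i + j)" unfolding V'_def using g.H3 by (simp add: distrib_left)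
    next
      fix i x v assume "x \<in> V' i" "bc x (bc x v) = 0" then show "bc x v = 0" unfolding V'_def using g.H5 by blast
    next
      fix z v assume "bc (cj v) (bc z v) = 0" then show "bc z v = 0" using g.H6 by blast
    next
      fix i x assume "x \<in> V' i" then show "cj x \<in> V' (- i)" unfolding V'_def using g.H7 by fastforce
    next
      fix x y assume "bc x y = 0" then show "bc y x = 0" using g.H8 by blast
    qed
    moreover obtain i' j' where "i = p * i'" "j = p * j'" using pi pj by blast
    ultimately show ?thesis using less.hyps[OF lt] less.prems unfolding V'_def by blast
  qed
qed



definition Zr :: "int \<Rightarrow> int \<Rightarrow> complex" where
  "Zr n k = cis (2 * pi * of_int k / of_int n)"

lemma Z_add: "n \<noteq> 0 \<Longrightarrow> Zr n a * Zr n b = Zr n (a + b)"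
  unfolding Zr_def cis_mult by (simp add: add_divide_distrib algebra_simps)

lemma Z_0: "Zr n 0 = 1" unfolding Zr_def by simp

lemma Z_cnj: "cnj (Zr n a) = Zr n (- a)" unfolding Zr_def cis_cnj by simp

lemma Z_nt: "n \<noteq> 0 \<Longrightarrow> Zr n (n * t) = 1"
proof -
  assume "n \<noteq> 0"
  then have "2 * pi * of_int (n * t) / of_int n = 2 * pi * of_int t" by simp
  then show ?thesis unfolding Zr_def using cis_multiple_2pi[of "of_int t"] by simp
qed

lemma Z_per: "n \<noteq> 0 \<Longrightarrow> Zr n (a + n * t) = Zr n a"
  using Z_add[of n a "n*t"] Z_nt[of n t] by simp

lemma Z_mod: "n \<noteq> 0 \<Longrightarrow> Zr n (a mod n) = Zr n a"
  using Z_per[of n "a mod n" "a div n"] by simp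

lemma Z_pow: "n \<noteq> 0 \<Longrightarrow> Zr n a ^ k = Zr n (int k * a)"
  by (induction k) (simp_all add: Z_0 Z_add algebra_simps)

lemma Z_ne1:
  assumes "0 < l" "l < N"
  shows "Zr (int N) (- int l) \<noteq> 1"
proof
  assume "Zr (int N) (- int l) = 1"
  then have "cnj (Zr (int N) (int l)) = 1" by (simp add: Z_cnj)
  then have "Zr (int N) (int l) = 1" by (metis complex_cnj_one complex_cnj_cnj)
  moreover have "Zr (int N) (int l) = exp (2 * complex_of_real pi * \<i> * complex_of_nat l / complex_of_nat N)"
    unfolding Zr_def cis_conv_exp by (simp add: algebra_simps)
  ultimately have "N dvd l" using complex_root_unity_eq_1[of N l] assms by simp
  then show False using assms by (simp add: nat_dvd_not_less)
qed

lemma Z_charsum: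
  assumes "l < N"
  shows "(\<Sum>k<N. Zr (int N) (- (int k * int l))) = (if l = 0 then of_nat N else 0)"
proof (cases "l = 0")
  case True then show ?thesis by (simp add: Z_0)
next
  case False
  have N0: "int N \<noteq> 0" using assms by simp
  have "(\<Sum>k<N. Zr (int N) (- (int k * int l))) = (\<Sum>k<N. Zr (int N) (- int l) ^ k)"
    using Z_pow[OF N0] by simp
  also have "\<dots> = 0"
  proof -
    have "Zr (int N) (- int l) ^ N = 1" using Z_pow[OF N0] Z_nt[OF N0, of "- int l"] by (simp add: algebra_simps)
    then show ?thesis using sum_gp_strict[of "Zr (int N) (- int l)" N] Z_ne1[of l N] False assms by simp
  qed
  finally show ?thesis using False by simp
qed


definition cm :: "complex \<Rightarrow> 'a::real_vector \<times> 'a \<Rightarrow> 'a \<times> 'a" where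
  "cm c x = (Re c *\<^sub>R fst x - Im c *\<^sub>R snd x, Re c *\<^sub>R snd x + Im c *\<^sub>R fst x)"

definition cjx :: "'a::real_vector \<times> 'a \<Rightarrow> 'a \<times> 'a" where
  "cjx x = (fst x, - snd x)"

definition bcx :: "('a::real_vector \<Rightarrow> 'a \<Rightarrow> 'a) \<Rightarrow> 'a \<times> 'a \<Rightarrow> 'a \<times> 'a \<Rightarrow> 'a \<times> 'a" where
  "bcx br x y = (br (fst x) (fst y) - br (snd x) (snd y), br (fst x) (snd y) + br (snd x) (fst y))"

definition phx :: "('a \<Rightarrow> 'a) \<Rightarrow> 'a \<times> 'a \<Rightarrow> 'a \<times> 'a" where
  "phx f x = (f (fst x), f (snd x))"

lemma cm_1[simp]: "cm 1 x = x" unfolding cm_def by simp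
lemma cm_0[simp]: "cm 0 x = 0" unfolding cm_def by (simp add: zero_prod_def)
lemma cm_zero2[simp]: "cm c 0 = 0" unfolding cm_def by (simp add: zero_prod_def)
lemma cm_mult: "cm a (cm b x) = cm (a * b) x"
  unfolding cm_def by (simp add: algebra_simps scaleR_add_right scaleR_diff_right)
lemma cm_add1: "cm (a + b) x = cm a x + cm b x"
  unfolding cm_def by (simp add: algebra_simps)
lemma cm_add2: "cm c (x + y) = cm c x + cm c y"
  unfolding cm_def by (simp add: algebra_simps)
lemma cm_sum1: "cm (sum f A) x = (\<Sum>a\<in>A. cm (f a) x)"
  by (induction A rule: infinite_finite_induct) (simp_all add: cm_add1)
lemma cm_sum2: "cm c (sum f A) = (\<Sum>a\<in>A. cm c (f a))"
  by (induction A rule: infinite_finite_induct) (simp_all add: cm_add2)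
lemma cm_of_nat: "cm (of_nat m) x = of_nat m *\<^sub>R x"
  unfolding cm_def by (simp add: prod_eq_iff)
lemma cjx_cm: "cjx (cm c x) = cm (cnj c) (cjx x)"
  unfolding cm_def cjx_def by (simp add: algebra_simps)
lemma cjx_cjx[simp]: "cjx (cjx x) = x" unfolding cjx_def by simp

locale hla =
  fixes br :: "'a::{real_inner,complete_space} \<Rightarrow> 'a \<Rightarrow> 'a"
  assumes lie: "lie_algebra br" and invv: "\<And>x y z. inner (br x y) z = inner x (br y z)"
begin

lemma lin1: "linear (br x)" using lie unfolding lie_algebra_def by blast
lemma lin2: "linear (\<lambda>x. br x y)" using lie unfolding lie_algebra_def by blast
lemma br_add1: "br (a + b) c = br a c + br b c" using linear_add[OF lin2] by blast
lemma br_add2: "br c (a + b) = br c a + br c b" using linear_add[OF lin1] by blast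
lemma br_diff1: "br (a - b) c = br a c - br b c" using linear_diff[OF lin2] by blast
lemma br_diff2: "br c (a - b) = br c a - br c b" using linear_diff[OF lin1] by blast
lemma br_neg1: "br (- a) c = - br a c" using linear_neg[OF lin2] by blast
lemma br_neg2: "br c (- a) = - br c a" using linear_neg[OF lin1] by blast
lemma br_scale1: "br (r *\<^sub>R a) c = r *\<^sub>R br a c" using linear_scale[OF lin2] by blast
lemma br_scale2: "br c (r *\<^sub>R a) = r *\<^sub>R br c a" using linear_scale[OF lin1] by blast
lemma br_zero1: "br 0 c = 0" using linear_0[OF lin2] by blast
lemma br_zero2: "br c 0 = 0" using linear_0[OF lin1] by blast
lemmas br_lin = br_add1 br_add2 br_diff1 br_diff2 br_neg1 br_neg2 br_scale1 br_scale2 br_zero1 br_zero2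

lemma br_self: "br x x = 0" using lie unfolding lie_algebra_def by blast
lemma br_anti: "br x y = - br y x"
proof -
  have "br (x + y) (x + y) = 0" by (rule br_self)
  then have "br x y + br y x = 0" using br_self[of x] br_self[of y] by (simp add: br_add1 br_add2 add_ac)
  then show ?thesis by (simp add: eq_neg_iff_add_eq_0)
qed
lemma jac: "br x (br y z) + br y (br z x) + br z (br x y) = 0"
  using lie unfolding lie_algebra_def by blast
lemma jac': "br a (br b c) = br (br a b) c + br b (br a c)"
proof -
  have "br a (br b c) = - br b (br c a) - br c (br a b)" using jac[of a b c]
    by (simp add: algebra_simps eq_neg_iff_add_eq_0)
  also have "br b (br c a) = - br b (br a c)" by (metis br_anti br_neg2)
  also have "br c (br a b) = - br (br a b) c" by (rule br_anti)
  finally show ?thesis by simp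
qed
lemma skew: "inner (br z x) y = - inner x (br z y)"
proof -
  have "inner (br z x) y = - inner (br x z) y" by (subst br_anti) simp
  then show ?thesis by (simp add: invv)
qed

lemma bcx_cm1: "bcx br (cm c x) y = cm c (bcx br x y)"
  unfolding bcx_def cm_def by (simp add: br_lin algebra_simps)
lemma bcx_cm2: "bcx br x (cm c y) = cm c (bcx br x y)"
  unfolding bcx_def cm_def by (simp add: br_lin algebra_simps)
lemma bcx_add1: "bcx br (x + x') y = bcx br x y + bcx br x' y"
  unfolding bcx_def by (simp add: br_lin algebra_simps)
lemma bcx_add2: "bcx br y (x + x') = bcx br y x + bcx br y x'"
  unfolding bcx_def by (simp add: br_lin algebra_simps)
lemma bcx_zero1[simp]: "bcx br 0 y = 0"
  unfolding bcx_def by (simp add: br_lin zero_prod_def)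
lemma bcx_zero2[simp]: "bcx br y 0 = 0"
  unfolding bcx_def by (simp add: br_lin zero_prod_def)
lemma bcx_scale1: "bcx br (r *\<^sub>R x) y = r *\<^sub>R bcx br x y"
  unfolding bcx_def by (simp add: br_lin algebra_simps)
lemma bcx_scale2: "bcx br y (r *\<^sub>R x) = r *\<^sub>R bcx br y x"
  unfolding bcx_def by (simp add: br_lin algebra_simps)
lemma bcx_sum1: "bcx br (sum f A) y = (\<Sum>a\<in>A. bcx br (f a) y)"
  by (induction A rule: infinite_finite_induct) (simp_all add: bcx_add1)
lemma bcx_sum2: "bcx br y (sum f A) = (\<Sum>a\<in>A. bcx br y (f a))"
  by (induction A rule: infinite_finite_induct) (simp_all add: bcx_add2)
lemma bcx_anti: "bcx br x y = - bcx br y x"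
  unfolding bcx_def using br_anti[of "fst y" "fst x"] br_anti[of "snd y" "snd x"]
    br_anti[of "fst y" "snd x"] br_anti[of "snd y" "fst x"] by (simp add: prod_eq_iff)
lemma cjx_bcx: "cjx (bcx br x y) = bcx br (cjx x) (cjx y)"
  unfolding bcx_def cjx_def by (simp add: br_lin algebra_simps)
lemma bcx_skew: "inner (bcx br z x) y = - inner x (bcx br (cjx z) y)"
  unfolding bcx_def cjx_def
  by (simp add: inner_prod_def br_lin inner_diff_left inner_add_left inner_diff_right inner_add_right skew)
lemma bcx_jac: "bcx br z (bcx br w v) = bcx br (bcx br z w) v + bcx br w (bcx br z v)"
proof -
  obtain z1 z2 where z: "z = (z1, z2)" by fastforce
  obtain w1 w2 where w: "w = (w1, w2)" by fastforce
  obtain v1 v2 where v: "v = (v1, v2)" by fastforce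
  note j = jac'[of z1 w1 v1] jac'[of z1 w2 v2] jac'[of z2 w1 v2] jac'[of z2 w2 v1]
     jac'[of z1 w1 v2] jac'[of z1 w2 v1] jac'[of z2 w1 v1] jac'[of z2 w2 v2]
  show ?thesis unfolding z w v bcx_def prod_eq_iff fst_conv snd_conv
    by (simp only: br_lin j) (simp add: algebra_simps)
qed


lemma normal_lemma:
  assumes c: "bcx br z (cjx z) = 0" and t: "bcx br z (bcx br z v) = 0"
  shows "bcx br z v = 0"
proof -
  define u where "u = bcx br z v"
  have zz: "bcx br (cjx z) z = 0" using c bcx_anti[of "cjx z" z] by simp
  have comm: "bcx br (cjx z) (bcx br z u) = bcx br z (bcx br (cjx z) u)"
    using bcx_jac[of "cjx z" z u] zz by simp
  have "inner (bcx br (cjx z) u) (bcx br (cjx z) u) = - inner u (bcx br z (bcx br (cjx z) u))"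
    using bcx_skew[of "cjx z" u] by simp
  also have "\<dots> = 0" using comm t unfolding u_def by simp
  finally have "bcx br (cjx z) u = 0" by simp
  then have "inner u u = 0" using bcx_skew[of z v u] unfolding u_def by simp
  then show ?thesis unfolding u_def by simp
qed

lemma H6_lemma:
  assumes "bcx br (cjx v) (bcx br z v) = 0"
  shows "bcx br z v = 0"
proof -
  define w where "w = bcx br z v"
  have "inner w w = - inner (bcx br v z) w" unfolding w_def using bcx_anti[of z v] by simp
  also have "\<dots> = inner z (bcx br (cjx v) w)" using bcx_skew[of v z w] by simp
  also have "\<dots> = 0" using assms unfolding w_def by simp
  finally show ?thesis unfolding w_def by simp
qed

end

locale hlaut = hla +
  fixes \<phi> :: "'a::{real_inner,complete_space} \<Rightarrow> 'a" and N :: nat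
  assumes linphi: "linear \<phi>" and hom: "\<And>x y. \<phi> (br x y) = br (\<phi> x) (\<phi> y)"
  and Npos: "N > 0" and ord: "(\<phi> ^^ N) = id"
  and fpf: "\<And>x. \<phi> x = x \<Longrightarrow> x = 0"
begin

definition VV :: "int \<Rightarrow> ('a \<times> 'a) set" where
  "VV k = {x. phx \<phi> x = cm (Zr (int N) k) x}"

lemma phi_lin: "\<phi> (a + b) = \<phi> a + \<phi> b" "\<phi> (a - b) = \<phi> a - \<phi> b" "\<phi> (- a) = - \<phi> a"
  "\<phi> (r *\<^sub>R a) = r *\<^sub>R \<phi> a" "\<phi> 0 = 0"
  using linear_add[OF linphi] linear_diff[OF linphi] linear_neg[OF linphi] linear_scale[OF linphi]
    linear_0[OF linphi] by auto

lemma phx_cm: "phx \<phi> (cm c x) = cm c (phx \<phi> x)"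
  unfolding phx_def cm_def by (simp add: phi_lin)
lemma phx_add: "phx \<phi> (x + y) = phx \<phi> x + phx \<phi> y"
  unfolding phx_def by (simp add: phi_lin)
lemma phx_0: "phx \<phi> 0 = 0"
  unfolding phx_def by (simp add: phi_lin zero_prod_def)
lemma phx_sum: "phx \<phi> (sum f A) = (\<Sum>a\<in>A. phx \<phi> (f a))"
  by (induction A rule: infinite_finite_induct) (simp_all add: phx_add phx_0)
lemma phx_bcx: "phx \<phi> (bcx br x y) = bcx br (phx \<phi> x) (phx \<phi> y)"
  unfolding phx_def bcx_def by (simp add: phi_lin hom)
lemma phx_cjx: "phx \<phi> (cjx x) = cjx (phx \<phi> x)"
  unfolding phx_def cjx_def by (simp add: phi_lin)
lemma phx_pow: "(phx \<phi> ^^ l) x = ((\<phi> ^^ l) (fst x), (\<phi> ^^ l) (snd x))"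
  by (induction l) (simp_all add: phx_def)
lemma phx_N: "(phx \<phi> ^^ N) x = x"
  using ord by (simp add: phx_pow)

lemma nN: "int N \<noteq> 0" using Npos by simp

lemma VV_H2: "x \<in> VV 0 \<Longrightarrow> x = 0"
  unfolding VV_def by (simp add: Z_0 phx_def prod_eq_iff fpf)

lemma VV_H3: "x \<in> VV i \<Longrightarrow> y \<in> VV j \<Longrightarrow> bcx br x y \<in> VV (i + j)"
  unfolding VV_def by (simp add: phx_bcx bcx_cm1 bcx_cm2 cm_mult Z_add[OF nN] add.commute)

lemma VV_H7: "x \<in> VV i \<Longrightarrow> cjx x \<in> VV (- i)"
  unfolding VV_def by (simp add: phx_cjx cjx_cm Z_cnj)

lemma VV_H5: "x \<in> VV i \<Longrightarrow> bcx br x (bcx br x v) = 0 \<Longrightarrow> bcx br x v = 0"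
proof -
  assume x: "x \<in> VV i" and t: "bcx br x (bcx br x v) = 0"
  have "bcx br x (cjx x) \<in> VV (i + - i)" using VV_H3[OF x VV_H7[OF x]] .
  then have "bcx br x (cjx x) = 0" using VV_H2 by simp
  then show ?thesis using normal_lemma t by blast
qed

lemma grad_inst: "grad (int N) (bcx br) cjx VV"
proof
  show "int N > 0" using Npos by simp
next
  fix j show "VV (j mod int N) = VV j" unfolding VV_def using Z_mod[OF nN] by simp
next
  fix x assume "x \<in> VV 0" then show "x = 0" by (rule VV_H2)
next
  fix i j x y assume "x \<in> VV i" "y \<in> VV j" then show "bcx br x y \<in> VV (i + j)" by (rule VV_H3)
next
  fix i x v assume "x \<in> VV i" "bcx br x (bcx br x v) = 0" then show "bcx br x v = 0" by (rule VV_H5)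
next
  fix z v assume "bcx br (cjx v) (bcx br z v) = 0" then show "bcx br z v = 0" by (rule H6_lemma)
next
  fix i x assume "x \<in> VV i" then show "cjx x \<in> VV (- i)" by (rule VV_H7)
next
  fix x y assume "bcx br x y = 0" then show "bcx br y x = 0" using bcx_anti[of y x] by simp
qed


definition Pj :: "nat \<Rightarrow> 'a \<times> 'a \<Rightarrow> 'a \<times> 'a" where
  "Pj k w = (\<Sum>l<N. cm (Zr (int N) (- (int k * int l))) ((phx \<phi> ^^ l) w))"

lemma Pj_mem: "Pj k w \<in> VV (int k)"
proof -
  obtain M where M: "N = Suc M" using Npos by (cases N) auto
  let ?Z = "Zr (int N)"
  have "phx \<phi> (Pj k w) = (\<Sum>l<Suc M. cm (?Z (- (int k * int l))) ((phx \<phi> ^^ Suc l) w))"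
    unfolding Pj_def M[symmetric] by (simp add: phx_sum phx_cm)
  also have "\<dots> = (\<Sum>l<M. cm (?Z (- (int k * int l))) ((phx \<phi> ^^ Suc l) w)) + cm (?Z (- (int k * int M))) w"
    using phx_N M by simp
  finally have L: "phx \<phi> (Pj k w) = (\<Sum>l<M. cm (?Z (- (int k * int l))) ((phx \<phi> ^^ Suc l) w)) + cm (?Z (- (int k * int M))) w" .
  have "cm (?Z (int k)) (Pj k w) = (\<Sum>l<Suc M. cm (?Z (int k) * ?Z (- (int k * int l))) ((phx \<phi> ^^ l) w))"
    unfolding Pj_def M[symmetric] by (simp add: cm_sum2 cm_mult)
  also have "\<dots> = cm (?Z (int k) * ?Z 0) w + (\<Sum>l<M. cm (?Z (int k) * ?Z (- (int k * int (Suc l)))) ((phx \<phi> ^^ Suc l) w))"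
    by (subst sum.lessThan_Suc_shift) simp
  also have "\<dots> = cm (?Z (- (int k * int M))) w + (\<Sum>l<M. cm (?Z (- (int k * int l))) ((phx \<phi> ^^ Suc l) w))"
  proof -
    have a: "?Z (int k) * ?Z (- (int k * int (Suc l))) = ?Z (- (int k * int l))" for l
      by (simp add: Z_add[OF nN] algebra_simps)
    have "int k = - (int k * int M) + int N * int k" using M by (simp add: algebra_simps)
    then have "?Z (int k) = ?Z (- (int k * int M))" using Z_per[OF nN, of "- (int k * int M)" "int k"] by metis
    then have b: "?Z (int k) * ?Z 0 = ?Z (- (int k * int M))" by (simp add: Z_0)
    show ?thesis by (simp only: a b)
  qed
  finally show ?thesis unfolding VV_def using L by (simp add: add.commute)
qed

lemma Pj_sum: "(\<Sum>k<N. Pj k w) = of_nat N *\<^sub>R w"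
proof -
  have "(\<Sum>k<N. Pj k w) = (\<Sum>l<N. \<Sum>k<N. cm (Zr (int N) (- (int k * int l))) ((phx \<phi> ^^ l) w))"
    unfolding Pj_def by (rule sum.swap)
  also have "\<dots> = (\<Sum>l<N. cm (\<Sum>k<N. Zr (int N) (- (int k * int l))) ((phx \<phi> ^^ l) w))"
    by (simp add: cm_sum1)
  also have "\<dots> = (\<Sum>l<N. if l = 0 then cm (of_nat N) ((phx \<phi> ^^ l) w) else 0)"
    by (rule sum.cong) (simp_all add: Z_charsum)
  also have "\<dots> = cm (of_nat N) w" using Npos by (simp add: sum.delta)
  finally show ?thesis by (simp add: cm_of_nat)
qed

lemma br_zero: "br x y = 0"
proof -
  define X :: "'a \<times> 'a" where "X = (x, 0)"
  define Y :: "'a \<times> 'a" where "Y = (y, 0)"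
  have "bcx br (of_nat N *\<^sub>R X) (of_nat N *\<^sub>R Y) = bcx br (\<Sum>k<N. Pj k X) (\<Sum>l<N. Pj l Y)"
    by (simp add: Pj_sum)
  also have "\<dots> = (\<Sum>k<N. \<Sum>l<N. bcx br (Pj k X) (Pj l Y))"
    by (simp add: bcx_sum1 bcx_sum2, rule sum.swap)
  also have "\<dots> = 0"
    using grad_abelian[OF grad_inst Pj_mem Pj_mem] by simp
  finally have "(of_nat N * of_nat N) *\<^sub>R bcx br X Y = 0" by (simp add: bcx_scale1 bcx_scale2)
  then have "bcx br X Y = 0" using Npos by simp
  then show ?thesis unfolding X_def Y_def bcx_def by (simp add: br_lin prod_eq_iff)
qed

end

theorem lemmaD1:
  fixes br :: "'a::{real_inner,complete_space} \<Rightarrow> 'a \<Rightarrow> 'a"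
    and \<phi> :: "'a \<Rightarrow> 'a"
  assumes "semisimple_hilbert_lie_algebra br"
    and "\<exists>x::'a. x \<noteq> 0"
    and "hl_automorphism br \<phi>"
    and "finite_order \<phi>"
  shows "{x. \<phi> x = x} \<noteq> {0}"
proof
  assume fix0: "{x. \<phi> x = x} = {0}"
  obtain N where N: "N > 0" "(\<phi> ^^ N) = id" using assms(4) unfolding finite_order_def by blast
  have hl: "hilbert_lie_algebra br" and cen: "lie_center br = {0}"
    using assms(1) unfolding semisimple_hilbert_lie_algebra_def by auto
  have "hlaut br \<phi> N"
    unfolding hlaut_def hla_def hlaut_axioms_def
    using hl assms(3) N fix0 unfolding hilbert_lie_algebra_def hl_automorphism_def by blast
  then interpret h: hlaut br \<phi> N .
  have "lie_center br = UNIV" unfolding lie_center_def using h.br_zero by blast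
  then show False using cen assms(2) by auto
qed

end
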